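(* Let $\theta_1,\theta_2,\theta_3\in\mathbb R$ and for $c_1,c_2,c_3\ge0$ with $c_1+c_2+c_3=1$ let $y(c_1,c_2,c_3)=\sum_{1\le k<j\le3}c_jc_k\sin^2\frac{\theta_j-\theta_k}{2}$. (i) If $\sin^2\frac{\theta_1-\theta_2}{2}\sin^2\frac{\theta_2-\theta_3}{2}\sin^2\frac{\theta_3-\theta_1}{2}>0$ and the vector $$\begin{bmatrix}\cos\frac{\theta_2-\theta_3}{2}\csc\frac{\theta_1-\theta_2}{2}\csc\frac{\theta_1-\theta_3}{2}\\ \cos\frac{\theta_1-\theta_3}{2}\csc\frac{\theta_2-\theta_1}{2}\csc\frac{\theta_2-\theta_3}{2}\\ \cos\frac{\theta_1-\theta_2}{2}\csc\frac{\theta_3-\theta_1}{2}\csc\frac{\theta_3-\theta_2}{2}\end{bmatrix}$$ has non-negative components, then $\max y=\frac14$. (ii) Otherwise $\max y=\frac14\max\{\sin^2\frac{\theta_1-\theta_2}{2},\sin^2\frac{\theta_1-\theta_3}{2},\sin^2\frac{\theta_2-\theta_3}{2}\}$. Here the maximum is over all $c_1,c_2,c_3\ge0$ with $c_1+c_2+c_3=1$. *)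

theory Defs
  imports "HOL-Analysis.Analysis"
begin

definition csc :: "real \<Rightarrow> real" where "csc x = 1 / sin x"

definition simplex3 :: "(real \<times> real \<times> real) set" where
  "simplex3 = {(c1,c2,c3). c1 \<ge> 0 \<and> c2 \<ge> 0 \<and> c3 \<ge> 0 \<and> c1 + c2 + c3 = 1}"

definition yfun :: "real \<Rightarrow> real \<Rightarrow> real \<Rightarrow> real \<times> real \<times> real \<Rightarrow> real" where
  "yfun t1 t2 t3 = (\<lambda>(c1,c2,c3).
     c2 * c1 * (sin ((t2 - t1) / 2))\<^sup>2 + c3 * c1 * (sin ((t3 - t1) / 2))\<^sup>2
     + c3 * c2 * (sin ((t3 - t2) / 2))\<^sup>2)"

definition is_max_value :: "('a \<Rightarrow> real) \<Rightarrow> 'a set \<Rightarrow> real \<Rightarrow> bool" where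
  "is_max_value f S v \<longleftrightarrow> v \<in> f ` S \<and> (\<forall>x\<in>S. f x \<le> v)"

end

theory Submission
  imports Defs
begin

lemma poly1:
  fixes u v w :: real
  shows "cos(v-w)* sin(v-w) - cos(u-w)* sin(u-w) + cos(u-v)* sin(u-v) = 2* sin(u-v)* sin(u-w)* sin(v-w)"
proof -
  have p: "sin u ^2 + cos u ^2 = 1" "sin v ^2 + cos v ^2 = 1" "sin w ^2 + cos w ^2 = 1" by simp_all
  show ?thesis
    apply (simp add: sin_diff cos_diff)
    using p by algebra
qed

lemma csd: "cos (x::real) * sin x = sin (2*x) / 2" by (simp add: sin_double)

lemma poly2:
  fixes u v w :: real
  shows "cos(v-w)* sin(v-w)*cos(2* u) - cos(u-w)* sin(u-w)*cos(2* v) + cos(u-v)* sin(u-v)*cos(2* w) = 0"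
  unfolding csd by (simp add: right_diff_distrib sin_diff field_simps)

lemma poly3:
  fixes u v w :: real
  shows "cos(v-w)* sin(v-w)* sin(2* u) - cos(u-w)* sin(u-w)* sin(2* v) + cos(u-v)* sin(u-v)* sin(2* w) = 0"
  unfolding csd by (simp add: right_diff_distrib sin_diff field_simps)

lemma poly4:
  fixes x y :: real
  shows "sin x ^2 + sin y ^2 - sin (y - x)^2 = 2 * sin x * sin y * cos (y - x)"
proof -
  have p: "sin x ^2 + cos x ^2 = 1" "sin y ^2 + cos y ^2 = 1" by simp_all
  show ?thesis
    apply (simp add: sin_diff cos_diff)
    using p by algebra
qed

lemma half: "sin ((z::real)/2) ^2 = (1 - cos z)/2"
  using cos_double_sin[of "z/2"] by simp

lemma sqswap: "sin (((a::real) - b)/2) ^2 = sin ((b - a)/2) ^2"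
proof -
  have e: "(b - a)/2 = - ((a-b)/2)" by (simp add: field_simps)
  have "sin((b-a)/2) = - sin((a-b)/2)" by (subst e) (rule sin_minus)
  thus ?thesis by simp
qed

lemma quad:
  fixes X1 Y1 X2 Y2 X3 Y3 c1 c2 c3 :: real
  assumes "X1^2+Y1^2=1" "X2^2+Y2^2=1" "X3^2+Y3^2=1" "c1+c2+c3=1"
  shows "4*(c2*c1*((1-(X2*X1+Y2*Y1))/2) + c3*c1*((1-(X3*X1+Y3*Y1))/2) + c3*c2*((1-(X3*X2+Y3*Y2))/2))
     = 1 - (c1*X1+c2*X2+c3*X3)^2 - (c1*Y1+c2*Y2+c3*Y3)^2"
  using assms by algebra

lemma yform:
  fixes t1 t2 t3 c1 c2 c3 :: real
  assumes "c1+c2+c3=1"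
  shows "4*yfun t1 t2 t3 (c1,c2,c3) = 1 - (c1*cos t1+c2*cos t2+c3*cos t3)^2 - (c1* sin t1+c2* sin t2+c3* sin t3)^2"
proof -
  have h: "sin ((x-y)/2)^2 = (1 - (cos x * cos y + sin x * sin y))/2" for x y :: real
    using half[of "x-y"] by (simp add: cos_diff)
  show ?thesis unfolding yfun_def
    apply (simp only: h case_prod_conv)
    by (rule quad) (simp_all add: assms)
qed

lemma geo:
  fixes X1 Y1 X2 Y2 X3 Y3 c1 c2 c3 :: real
  assumes "X1^2+Y1^2=1" "X2^2+Y2^2=1" "X3^2+Y3^2=1" "c1+c2+c3=1"
    "c1 \<ge> 0" "c2 \<ge> 0" "c3 \<ge> 0"
    "(X1*X2+Y1*Y2) + (X1*X3+Y1*Y3) \<ge> 1 + (X2*X3+Y2*Y3)"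
  shows "(c1*X1+c2*X2+c3*X3)^2 + (c1*Y1+c2*Y2+c3*Y3)^2 \<ge> (1 + (X2*X3+Y2*Y3))/2"
proof -
  define n1 where "n1 = X2+X3"
  define n2 where "n2 = Y2+Y3"
  define p1 where "p1 = c1*X1+c2*X2+c3*X3"
  define p2 where "p2 = c1*Y1+c2*Y2+c3*Y3"
  define h where "h = 1 + (X2*X3+Y2*Y3)"
  define nn where "nn = n1^2+n2^2"
  have nn: "nn = 2*h"
    unfolding nn_def n1_def n2_def h_def using assms(2,3) by algebra
  have nx1: "n1*X1+n2*Y1 \<ge> h" using assms(8) unfolding h_def n1_def n2_def by (simp add: algebra_simps)
  have nx2: "n1*X2+n2*Y2 = h" using assms(2) unfolding h_def n1_def n2_def by algebra
  have nx3: "n1*X3+n2*Y3 = h" using assms(3) unfolding h_def n1_def n2_def by algebra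
  have np: "n1*p1+n2*p2 = c1*(n1*X1+n2*Y1) + c2*(n1*X2+n2*Y2) + c3*(n1*X3+n2*Y3)"
    unfolding p1_def p2_def by (simp add: algebra_simps)
  have "c1*(n1*X1+n2*Y1) \<ge> c1*h" using nx1 assms(5) by (simp add: mult_left_mono)
  moreover have "n1*p1+n2*p2 = c1*(n1*X1+n2*Y1) + c2*h + c3*h" using np nx2 nx3 by simp
  moreover have "c1*h + c2*h + c3*h = h"
  proof -
    have "(c1+c2+c3)*h = h" using assms(4) by simp
    thus ?thesis by (simp add: distrib_right)
  qed
  ultimately have npg: "n1*p1+n2*p2 \<ge> h" by linarith
  have nn0: "nn \<ge> 0" unfolding nn_def by simp
  hence h0: "h \<ge> 0" using nn by simp
  have cs: "(n1*p1+n2*p2)^2 \<le> nn*(p1^2+p2^2)"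
  proof -
    have "nn*(p1^2+p2^2) - (n1*p1+n2*p2)^2 = (n1*p2-n2*p1)^2" unfolding nn_def by algebra
    thus ?thesis using zero_le_power2[of "n1*p2-n2*p1"] by linarith
  qed
  have "h^2 \<le> (n1*p1+n2*p2)^2" using npg h0 by (simp add: power_mono)
  hence "h*h \<le> (2*h)*(p1^2+p2^2)" using cs nn by (simp add: power2_eq_square)
  hence "h/2 \<le> p1^2+p2^2"
  proof (cases "h = 0")
    case True thus ?thesis by simp
  next
    case False
    hence "h > 0" using h0 by simp
    moreover have "h*h \<le> h*(2*(p1^2+p2^2))" using \<open>h*h \<le> (2*h)*(p1^2+p2^2)\<close> by (simp add: algebra_simps)
    ultimately have "h \<le> 2*(p1^2+p2^2)" by (simp add: mult_le_cancel_left)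
    thus ?thesis by simp
  qed
  thus ?thesis unfolding p1_def p2_def h_def by simp
qed

lemma ub:
  assumes "c1+c2+c3=1"
  shows "yfun t1 t2 t3 (c1,c2,c3) \<le> 1/4"
  using yform[OF assms, of t1 t2 t3] zero_le_power2[of "c1 * cos t1 + c2 * cos t2 + c3 * cos t3"]
    zero_le_power2[of "c1 * sin t1 + c2 * sin t2 + c3 * sin t3"] by linarith

lemma geoapp:
  fixes t1 t2 t3 c1 c2 c3 :: real
  assumes "c1+c2+c3=1" "c1 \<ge> 0" "c2 \<ge> 0" "c3 \<ge> 0"
    "sin((t2-t3)/2)^2 \<ge> sin((t1-t2)/2)^2 + sin((t1-t3)/2)^2"
  shows "4*yfun t1 t2 t3 (c1,c2,c3) \<le> sin((t2-t3)/2)^2"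
proof -
  have h: "sin ((x-y)/2)^2 = (1 - (cos x * cos y + sin x * sin y))/2" for x y :: real
    using half[of "x-y"] by (simp add: cos_diff)
  have c: "(cos t1 * cos t2 + sin t1 * sin t2) + (cos t1 * cos t3 + sin t1 * sin t3) \<ge> 1 + (cos t2 * cos t3 + sin t2 * sin t3)"
    using assms(5) unfolding h by (simp add: field_simps)
  note g = geo[of "cos t1" "sin t1" "cos t2" "sin t2" "cos t3" "sin t3" c1 c2 c3, OF _ _ _ assms(1-4) c]
  show ?thesis using g yform[OF assms(1), of t1 t2 t3] h[of t2 t3] by simp
qed

lemma yperm12: "yfun t2 t1 t3 (c2,c1,c3) = yfun t1 t2 t3 (c1,c2,c3)"
  unfolding yfun_def using sqswap[of t1 t2] by (simp add: algebra_simps)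

lemma yperm312: "yfun t3 t1 t2 (c3,c1,c2) = yfun t1 t2 t3 (c1,c2,c3)"
  unfolding yfun_def using sqswap[of t1 t3] sqswap[of t2 t3] by (simp add: algebra_simps)

lemma zbound:
  fixes c1 c2 c3 p q M :: real
  assumes "c1+c2+c3=1" "c1 \<ge> 0" "c2 \<ge> 0" "c3 \<ge> 0" "p \<ge> 0" "q \<ge> 0" "p \<le> M" "q \<le> M"
  shows "c3*c1*p + c3*c2*q \<le> M/4"
proof -
  have "c3*c1*p \<le> c3*c1*M" using assms by (simp add: mult_left_mono)
  moreover have "c3*c2*q \<le> c3*c2*M" using assms by (simp add: mult_left_mono)
  moreover have "c3*c1*M + c3*c2*M = c3*(1-c3)*M"
  proof -
    have "c1 + c2 = 1 - c3" using assms(1) by linarith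
    have "c3*c1*M + c3*c2*M = c3*(c1+c2)*M" by (simp add: algebra_simps)
    thus ?thesis using \<open>c1 + c2 = 1 - c3\<close> by simp
  qed
  moreover have q14: "c3*(1-c3) \<le> 1/4"
  proof -
    have "c3*(1-c3) = 1/4 - (c3-1/2)^2" by (simp add: power2_eq_square algebra_simps)
    thus ?thesis by simp
  qed
  moreover have M0: "M \<ge> 0" using assms by simp
  have "c3*(1-c3)*M \<le> 1/4*M" by (rule mult_right_mono[OF q14 M0])
  thus ?thesis using \<open>c3*c1*p \<le> c3*c1*M\<close> \<open>c3*c2*q \<le> c3*c2*M\<close> \<open>c3*c1*M + c3*c2*M = c3*(1-c3)*M\<close> by linarith
qed

lemma signlem:
  fixes k x y :: real
  assumes "sin x \<noteq> 0" "sin y \<noteq> 0" "k * csc x * csc y < 0"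
  shows "k * sin x * sin y < 0"
proof -
  have eq: "k * sin x * sin y = (k * csc x * csc y) * (sin x * sin y)^2"
    using assms(1,2) unfolding csc_def by (simp add: field_simps power2_eq_square)
  moreover have "(sin x * sin y)^2 > 0" using assms(1,2) by simp
  ultimately have "(k * csc x * csc y) * (sin x * sin y)^2 < 0" using assms(3) by (simp add: mult_neg_pos)
  thus ?thesis by (subst eq)
qed


lemma wit:
  fixes u v w :: real
  assumes "sin(u-v) \<noteq> 0" "sin(u-w) \<noteq> 0" "sin(v-w) \<noteq> 0"
  shows "cos(v-w) * csc(u-v) * csc(u-w) + cos(u-w) * csc(v-u) * csc(v-w) + cos(u-v) * csc(w-u) * csc(w-v) = 2"
    "cos(v-w) * csc(u-v) * csc(u-w) * cos(2 * u) + cos(u-w) * csc(v-u) * csc(v-w) * cos(2 * v)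
       + cos(u-v) * csc(w-u) * csc(w-v) * cos(2 * w) = 0"
    "cos(v-w) * csc(u-v) * csc(u-w) * sin(2 * u) + cos(u-w) * csc(v-u) * csc(v-w) * sin(2 * v)
       + cos(u-v) * csc(w-u) * csc(w-v) * sin(2 * w) = 0"
proof -
  have m: "v - u = -(u-v)" "w - u = -(u-w)" "w - v = -(v-w)" by simp_all
  have s: "sin(v-u) = - sin(u-v)" "sin(w-u) = -sin(u-w)" "sin(w-v) = - sin(v-w)"
    by (metis minus_diff_eq sin_minus)+
  have e1: "cos(v-w) * csc(u-v) * csc(u-w) + cos(u-w) * csc(v-u) * csc(v-w) + cos(u-v) * csc(w-u) * csc(w-v)
     = (cos(v-w) * sin(v-w) - cos(u-w) * sin(u-w) + cos(u-v) * sin(u-v)) / (sin(u-v) * sin(u-w) * sin(v-w))"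
    using assms unfolding csc_def s by (simp add: field_simps)
  show "cos(v-w) * csc(u-v) * csc(u-w) + cos(u-w) * csc(v-u) * csc(v-w) + cos(u-v) * csc(w-u) * csc(w-v) = 2"
    unfolding e1 poly1 using assms by simp
  have e2: "cos(v-w) * csc(u-v) * csc(u-w) * cos(2 * u) + cos(u-w) * csc(v-u) * csc(v-w) * cos(2 * v)
       + cos(u-v) * csc(w-u) * csc(w-v) * cos(2 * w)
     = (cos(v-w) * sin(v-w) * cos(2 * u) - cos(u-w) * sin(u-w) * cos(2 * v) + cos(u-v) * sin(u-v) * cos(2 * w)) / (sin(u-v) * sin(u-w) * sin(v-w))"
    using assms unfolding csc_def s by (simp add: field_simps)
  show "cos(v-w) * csc(u-v) * csc(u-w) * cos(2 * u) + cos(u-w) * csc(v-u) * csc(v-w) * cos(2 * v)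
       + cos(u-v) * csc(w-u) * csc(w-v) * cos(2 * w) = 0"
    unfolding e2 poly2 by simp
  have e3: "cos(v-w) * csc(u-v) * csc(u-w) * sin(2 * u) + cos(u-w) * csc(v-u) * csc(v-w) * sin(2 * v)
       + cos(u-v) * csc(w-u) * csc(w-v) * sin(2 * w)
     = (cos(v-w) * sin(v-w) * sin(2 * u) - cos(u-w) * sin(u-w) * sin(2 * v) + cos(u-v) * sin(u-v) * sin(2 * w)) / (sin(u-v) * sin(u-w) * sin(v-w))"
    using assms unfolding csc_def s by (simp add: field_simps)
  show "cos(v-w) * csc(u-v) * csc(u-w) * sin(2 * u) + cos(u-w) * csc(v-u) * csc(v-w) * sin(2 * v)
       + cos(u-v) * csc(w-u) * csc(w-v) * sin(2 * w) = 0"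
    unfolding e3 poly3 by simp
qed

theorem lemma6:
  fixes t1 t2 t3 :: real
  shows "(((sin ((t1 - t2) / 2))\<^sup>2 * (sin ((t2 - t3) / 2))\<^sup>2 * (sin ((t3 - t1) / 2))\<^sup>2 > 0
            \<and> cos ((t2 - t3) / 2) * csc ((t1 - t2) / 2) * csc ((t1 - t3) / 2) \<ge> 0
            \<and> cos ((t1 - t3) / 2) * csc ((t2 - t1) / 2) * csc ((t2 - t3) / 2) \<ge> 0
            \<and> cos ((t1 - t2) / 2) * csc ((t3 - t1) / 2) * csc ((t3 - t2) / 2) \<ge> 0)
          \<longrightarrow> is_max_value (yfun t1 t2 t3) simplex3 (1 / 4))
       \<and> (\<not> ((sin ((t1 - t2) / 2))\<^sup>2 * (sin ((t2 - t3) / 2))\<^sup>2 * (sin ((t3 - t1) / 2))\<^sup>2 > 0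
            \<and> cos ((t2 - t3) / 2) * csc ((t1 - t2) / 2) * csc ((t1 - t3) / 2) \<ge> 0
            \<and> cos ((t1 - t3) / 2) * csc ((t2 - t1) / 2) * csc ((t2 - t3) / 2) \<ge> 0
            \<and> cos ((t1 - t2) / 2) * csc ((t3 - t1) / 2) * csc ((t3 - t2) / 2) \<ge> 0)
          \<longrightarrow> is_max_value (yfun t1 t2 t3) simplex3
                (1 / 4 * Max {(sin ((t1 - t2) / 2))\<^sup>2, (sin ((t1 - t3) / 2))\<^sup>2, (sin ((t2 - t3) / 2))\<^sup>2}))"
proof -
  define a where "a = sin((t1-t2)/2)^2"
  define b where "b = sin((t1-t3)/2)^2"
  define c where "c = sin((t2-t3)/2)^2"
  define k1 where "k1 = cos ((t2 - t3) / 2) * csc ((t1 - t2) / 2) * csc ((t1 - t3) / 2)"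
  define k2 where "k2 = cos ((t1 - t3) / 2) * csc ((t2 - t1) / 2) * csc ((t2 - t3) / 2)"
  define k3 where "k3 = cos ((t1 - t2) / 2) * csc ((t3 - t1) / 2) * csc ((t3 - t2) / 2)"
  define P where "P = (sin ((t1 - t2) / 2))\<^sup>2 * (sin ((t2 - t3) / 2))\<^sup>2 * (sin ((t3 - t1) / 2))\<^sup>2"
  have b': "sin((t3-t1)/2)^2 = b" unfolding b_def by (rule sqswap)
  have a': "sin((t2-t1)/2)^2 = a" unfolding a_def by (rule sqswap)
  have c': "sin((t3-t2)/2)^2 = c" unfolding c_def by (rule sqswap)
  have ya: "yfun t1 t2 t3 (x1,x2,x3) = x2*x1*a + x3*x1*b + x3*x2*c" for x1 x2 x3
    unfolding yfun_def using a' b' c' by simp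
  have simp_iff: "(x1,x2,x3) \<in> simplex3 \<longleftrightarrow> x1 \<ge> 0 \<and> x2 \<ge> 0 \<and> x3 \<ge> 0 \<and> x1+x2+x3 = 1" for x1 x2 x3
    unfolding simplex3_def by simp
  have nz: "sin((t1-t2)/2) \<noteq> 0" "sin((t1-t3)/2) \<noteq> 0" "sin((t2-t3)/2) \<noteq> 0"
     "sin((t2-t1)/2) \<noteq> 0" "sin((t3-t1)/2) \<noteq> 0" "sin((t3-t2)/2) \<noteq> 0" if "P > 0"
  proof -
    have "a \<noteq> 0" "b \<noteq> 0" "c \<noteq> 0" using that b' unfolding P_def a_def c_def by auto
    thus "sin((t1-t2)/2) \<noteq> 0" "sin((t1-t3)/2) \<noteq> 0" "sin((t2-t3)/2) \<noteq> 0"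
     "sin((t2-t1)/2) \<noteq> 0" "sin((t3-t1)/2) \<noteq> 0" "sin((t3-t2)/2) \<noteq> 0"
      using a' b' c' unfolding a_def b_def c_def by auto
  qed
  show ?thesis
    unfolding k1_def[symmetric] k2_def[symmetric] k3_def[symmetric] P_def[symmetric]
  proof (intro conjI impI)
    assume H: "P > 0 \<and> k1 \<ge> 0 \<and> k2 \<ge> 0 \<and> k3 \<ge> 0"
    have q: "t1/2 - t2/2 = (t1-t2)/2" "t1/2 - t3/2 = (t1-t3)/2" "t2/2 - t3/2 = (t2-t3)/2"
       "t2/2 - t1/2 = (t2-t1)/2" "t3/2 - t1/2 = (t3-t1)/2" "t3/2 - t2/2 = (t3-t2)/2"
       "2 * (t1/2) = t1" "2 * (t2/2) = t2" "2 * (t3/2) = t3" by simp_all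
    note W = wit[of "t1/2" "t2/2" "t3/2", unfolded q]
    have n3: "sin((t1-t2)/2) \<noteq> 0" "sin((t1-t3)/2) \<noteq> 0" "sin((t2-t3)/2) \<noteq> 0"
      using nz H by auto
    have w1: "k1 + k2 + k3 = 2" and w2: "k1 * cos t1 + k2 * cos t2 + k3 * cos t3 = 0"
      and w3: "k1 * sin t1 + k2 * sin t2 + k3 * sin t3 = 0"
      using W[OF n3] unfolding k1_def k2_def k3_def by auto
    have s1: "k1/2 + k2/2 + k3/2 = 1" using w1 by simp
    have mem: "(k1/2, k2/2, k3/2) \<in> simplex3" using H s1 unfolding simp_iff by simp
    have "4 * yfun t1 t2 t3 (k1/2, k2/2, k3/2) = 1"
      using yform[OF s1, of t1 t2 t3] w2 w3 by (simp add: field_simps)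
    hence "yfun t1 t2 t3 (k1/2, k2/2, k3/2) = 1/4" by simp
    hence "1/4 \<in> yfun t1 t2 t3 ` simplex3" using mem by (metis image_eqI)
    moreover have "\<forall>x\<in>simplex3. yfun t1 t2 t3 x \<le> 1/4"
      using ub unfolding simplex3_def by auto
    ultimately show "is_max_value (yfun t1 t2 t3) simplex3 (1/4)"
      unfolding is_max_value_def by simp
  next
    assume H: "\<not> (P > 0 \<and> k1 \<ge> 0 \<and> k2 \<ge> 0 \<and> k3 \<ge> 0)"
    define M where "M = max a (max b c)"
    have MM: "Max {a, b, c} = M" unfolding M_def by simp
    have a0: "a \<ge> 0" "b \<ge> 0" "c \<ge> 0" unfolding a_def b_def c_def by simp_all
    have aM: "a \<le> M" "b \<le> M" "c \<le> M" unfolding M_def by auto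
    have bound: "yfun t1 t2 t3 (x1,x2,x3) \<le> M/4" if xs: "x1 \<ge> 0" "x2 \<ge> 0" "x3 \<ge> 0" "x1+x2+x3 = 1"
      for x1 x2 x3
    proof (cases "P > 0")
      case False
      have "P \<ge> 0" unfolding P_def by simp
      hence "P = 0" using False by simp
      hence "a = 0 \<or> c = 0 \<or> b = 0" unfolding P_def a_def c_def b'[symmetric] by simp
      moreover
      { assume "a = 0"
        hence ?thesis unfolding ya using zbound[of x1 x2 x3 b c M] xs a0 aM by simp }
      moreover
      { assume "b = 0"
        hence ?thesis unfolding ya using zbound[of x1 x3 x2 a c M] xs a0 aM by (simp add: algebra_simps) }
      moreover
      { assume "c = 0"
        hence ?thesis unfolding ya using zbound[of x2 x3 x1 a b M] xs a0 aM by (simp add: algebra_simps) }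
      ultimately show ?thesis by blast
    next
      case True
      note nzs = nz[OF True]
      have "k1 < 0 \<or> k2 < 0 \<or> k3 < 0" using H True by auto
      moreover
      { assume "k1 < 0"
        hence neg: "cos ((t2 - t3) / 2) * sin ((t1 - t2) / 2) * sin ((t1 - t3) / 2) < 0"
          using signlem nzs unfolding k1_def by blast
        have e: "(t1 - t3) / 2 - (t1 - t2) / 2 = (t2-t3)/2" by (simp add: field_simps)
        have pp: "a + b - c = 2 * sin ((t1 - t2) / 2) * sin ((t1 - t3) / 2) * cos ((t2 - t3) / 2)"
          using poly4[of "(t1 - t2) / 2" "(t1 - t3) / 2", unfolded e] unfolding a_def b_def c_def .
        have "2 * sin ((t1 - t2) / 2) * sin ((t1 - t3) / 2) * cos ((t2 - t3) / 2)
           = 2 * (cos ((t2 - t3) / 2) * sin ((t1 - t2) / 2) * sin ((t1 - t3) / 2))" by (simp only: mult_ac)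
        hence cnd: "c \<ge> a + b" using pp neg by linarith
        have "4 * yfun t1 t2 t3 (x1,x2,x3) \<le> sin ((t2 - t3) / 2) ^ 2"
          by (rule geoapp) (use xs cnd in \<open>simp_all add: a_def b_def c_def\<close>)
        hence ?thesis using aM unfolding c_def by simp }
      moreover
      { assume "k2 < 0"
        hence neg: "cos ((t1 - t3) / 2) * sin ((t2 - t1) / 2) * sin ((t2 - t3) / 2) < 0"
          using signlem nzs unfolding k2_def by blast
        have e: "(t2 - t3) / 2 - (t2 - t1) / 2 = (t1-t3)/2" by (simp add: field_simps)
        have pp: "a + c - b = 2 * sin ((t2 - t1) / 2) * sin ((t2 - t3) / 2) * cos ((t1 - t3) / 2)"
          using poly4[of "(t2 - t1) / 2" "(t2 - t3) / 2", unfolded e a'] unfolding b_def c_def .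
        have "2 * sin ((t2 - t1) / 2) * sin ((t2 - t3) / 2) * cos ((t1 - t3) / 2)
           = 2 * (cos ((t1 - t3) / 2) * sin ((t2 - t1) / 2) * sin ((t2 - t3) / 2))" by (simp only: mult_ac)
        hence cnd: "b \<ge> a + c" using pp neg by linarith
        have "4 * yfun t2 t1 t3 (x2,x1,x3) \<le> sin ((t1 - t3) / 2) ^ 2"
          by (rule geoapp) (use xs cnd a' in \<open>simp_all add: a_def b_def c_def\<close>)
        hence ?thesis using aM yperm12 unfolding b_def by simp }
      moreover
      { assume "k3 < 0"
        hence neg: "cos ((t1 - t2) / 2) * sin ((t3 - t1) / 2) * sin ((t3 - t2) / 2) < 0"
          using signlem nzs unfolding k3_def by blast
        have e: "(t3 - t2) / 2 - (t3 - t1) / 2 = (t1-t2)/2" by (simp add: field_simps)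
        have pp: "b + c - a = 2 * sin ((t3 - t1) / 2) * sin ((t3 - t2) / 2) * cos ((t1 - t2) / 2)"
          using poly4[of "(t3 - t1) / 2" "(t3 - t2) / 2", unfolded e b' c'] unfolding a_def .
        have "2 * sin ((t3 - t1) / 2) * sin ((t3 - t2) / 2) * cos ((t1 - t2) / 2)
           = 2 * (cos ((t1 - t2) / 2) * sin ((t3 - t1) / 2) * sin ((t3 - t2) / 2))" by (simp only: mult_ac)
        hence cnd: "a \<ge> b + c" using pp neg by linarith
        have "4 * yfun t3 t1 t2 (x3,x1,x2) \<le> sin ((t1 - t2) / 2) ^ 2"
          by (rule geoapp) (use xs cnd b' c' in \<open>simp_all add: a_def b_def c_def\<close>)
        hence ?thesis using aM yperm312 unfolding a_def by simp }
      ultimately show ?thesis by blast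
    qed
    have att: "M/4 \<in> yfun t1 t2 t3 ` simplex3"
    proof -
      have "M = a \<or> M = b \<or> M = c" unfolding M_def by linarith
      moreover
      { assume "M = a"
        moreover have "(1/2, 1/2, 0) \<in> simplex3" unfolding simp_iff by simp
        moreover have "yfun t1 t2 t3 (1/2, 1/2, 0) = a/4" unfolding ya by simp
        ultimately have ?thesis by (metis image_eqI) }
      moreover
      { assume "M = b"
        moreover have "(1/2, 0, 1/2) \<in> simplex3" unfolding simp_iff by simp
        moreover have "yfun t1 t2 t3 (1/2, 0, 1/2) = b/4" unfolding ya by simp
        ultimately have ?thesis by (metis image_eqI) }
      moreover
      { assume "M = c"
        moreover have "(0, 1/2, 1/2) \<in> simplex3" unfolding simp_iff by simp
        moreover have "yfun t1 t2 t3 (0, 1/2, 1/2) = c/4" unfolding ya by simp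
        ultimately have ?thesis by (metis image_eqI) }
      ultimately show ?thesis by blast
    qed
    show "is_max_value (yfun t1 t2 t3) simplex3 (1 / 4 * Max {(sin ((t1 - t2) / 2))\<^sup>2, (sin ((t1 - t3) / 2))\<^sup>2, (sin ((t2 - t3) / 2))\<^sup>2})"
      unfolding a_def[symmetric] b_def[symmetric] c_def[symmetric] MM is_max_value_def
      using att bound unfolding simplex3_def by auto
  qed
qed

end
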